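(* Let $M$ be a finite monoid such that for all $x,y\in M$, either $R(x)\subseteq R(xy)$ or $R(y)\subseteq R(xy)$. Then there exists $k\ge2$ such that $x^k=x$ for all $x\in M$.
   Context: For $m$ in a monoid $M$, $R(m)=\{my: y\in M\}$ is the right ideal of $m$. *)

theory Defs
  imports Main
begin

definition right_ideal :: "'a::monoid_mult \<Rightarrow> 'a set" where
  "right_ideal m = {m * y | y. True}"

end

theory Submission
  imports Defs
begin

lemma pow_in:
  fixes x :: "'a::monoid_mult"
  assumes h: "\<exists>z. x = x * x * z" and n: "n \<ge> 1"
  shows "\<exists>y. x = x ^ n * y"
  using n
proof (induction n rule: dec_induct)
  case base then show ?case by (rule exI[of _ 1]) simp
next
  case (step n)
  from step.IH obtain y where y: "x = x ^ n * y" by blast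
  from h obtain z where z: "x = x * x * z" by blast
  have "x ^ n = x ^ (n - 1) * x" using step.hyps
    by (metis Suc_diff_le diff_Suc_1 power_Suc2 le_refl Suc_le_lessD less_imp_le_nat not_one_le_zero not_less_eq_eq Nat.le_diff_conv2 add_diff_cancel_left' plus_1_eq_Suc)
  also have "\<dots> = x ^ (n - 1) * (x * x * z)" using z by metis
  also have "\<dots> = x ^ Suc n * z" using step.hyps
    by (metis (no_types, lifting) Suc_diff_1 less_le_trans mult.assoc power_Suc2 zero_less_one)
  finally have "x = x ^ Suc n * (z * y)" using y by (metis mult.assoc)
  then show ?case by blast
qed

lemma period:
  fixes x :: "'a::monoid_mult"
  assumes fin: "finite (UNIV :: 'a set)" and h: "\<exists>z. x = x * x * z"
  shows "\<exists>d\<ge>1. x ^ (d + 1) = x"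
proof -
  have "\<not> inj (\<lambda>n::nat. x ^ Suc n)"
  proof
    assume "inj (\<lambda>n::nat. x ^ Suc n)"
    then have "infinite (range (\<lambda>n::nat. x ^ Suc n))"
      using finite_imageD infinite_UNIV_nat by blast
    then show False using fin by (meson finite_subset subset_UNIV)
  qed
  then obtain m n :: nat where mn: "m \<noteq> n" "x ^ Suc m = x ^ Suc n"
    unfolding inj_def by blast
  then obtain a b where ab: "a < b" "x ^ Suc a = x ^ Suc b"
    by (metis linorder_neqE_nat)
  define d where "d = b - a"
  have d1: "d \<ge> 1" using ab d_def by simp
  have eq: "x ^ Suc a = x ^ Suc a * x ^ d" using ab d_def
    by (metis Nat.add_diff_assoc2 add_Suc less_imp_le_nat power_add add.commute le_add_diff_inverse)
  obtain y where y: "x = x ^ Suc a * y" using pow_in[OF h, of "Suc a"] by auto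
  have "x ^ (d + 1) = x ^ d * x" by (simp add: power_commutes)
  also have "\<dots> = x ^ d * x ^ Suc a * y" using y by (simp add: mult.assoc)
  also have "x ^ d * x ^ Suc a = x ^ Suc a * x ^ d" by (metis power_add add.commute)
  also have "\<dots> = x ^ Suc a" using eq by simp
  finally have "x ^ (d + 1) = x" using y by simp
  then show ?thesis using d1 by blast
qed

lemma mult_period:
  fixes x :: "'a::monoid_mult"
  assumes "x ^ (d + 1) = x"
  shows "x ^ (j * d + 1) = x"
proof (induction j)
  case 0 then show ?case by simp
next
  case (Suc j)
  have "x ^ (Suc j * d + 1) = x ^ (j * d + 1) * x ^ d" by (simp add: power_add[symmetric] algebra_simps)
  also have "\<dots> = x * x ^ d" using Suc by simp
  also have "\<dots> = x ^ (d + 1)" by (simp add: power_commutes)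
  finally show ?case using assms by simp
qed

theorem lemmaB1:
  assumes "finite (UNIV :: 'a::monoid_mult set)"
    and "\<forall>x y :: 'a. right_ideal x \<subseteq> right_ideal (x * y) \<or> right_ideal y \<subseteq> right_ideal (x * y)"
  shows "\<exists>k::nat. k \<ge> 2 \<and> (\<forall>x :: 'a. x ^ k = x)"
proof -
  have h: "\<exists>z. x = x * x * z" for x :: 'a
  proof -
    have "right_ideal x \<subseteq> right_ideal (x * x)" using assms(2) by blast
    moreover have "x \<in> right_ideal x" unfolding right_ideal_def by (rule CollectI, rule exI[of _ 1]) simp
    ultimately show ?thesis unfolding right_ideal_def by blast
  qed
  have "\<forall>x::'a. \<exists>d. d \<ge> 1 \<and> x ^ (d + 1) = x" using period[OF assms(1) h] by blast
  then obtain p where p: "\<And>x::'a. p x \<ge> 1 \<and> x ^ (p x + 1) = x" by metis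
  define N where "N = (\<Prod>x\<in>(UNIV::'a set). p x)"
  have N1: "N \<ge> 1" unfolding N_def using p
    by (metis One_nat_def Suc_le_eq prod_pos)
  have "x ^ (N + 1) = x" for x :: 'a
  proof -
    have "p x dvd N" unfolding N_def using assms(1) by (simp add: dvd_prod_eqI)
    then obtain j where "N = j * p x" by (metis dvd_def mult.commute)
    then show ?thesis using mult_period p by metis
  qed
  then show ?thesis using N1 by (intro exI[of _ "N+1"]) auto
qed

end
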